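(* Let $A\in\mathbb{R}^{m\times n}$ and let $A=U_1-V_1=U_2-V_2$ be two convergent proper nonnegative splittings of different types (one of type I and the other of type II). If $A^{\dagger}\leq 0$ and $U_2^{\dagger}\geq U_1^{\dagger}$, then $\rho(U_1^{\dagger}V_1)\leq\rho(U_2^{\dagger}V_2)<1$. In particular, if $A^{\dagger}<0$ and $U_2^{\dagger}>U_1^{\dagger}$, then $\rho(U_1^{\dagger}V_1)<\rho(U_2^{\dagger}V_2)<1$.
   Context: $A^{\dagger}$ denotes the Moore–Penrose inverse and $\rho(\cdot)$ the spectral radius. Inequalities are entrywise; strict inequalities $X>Y$, $X<0$ mean entrywise strict. A splitting $A=U-V$ is proper if $R(U)=R(A)$ and $N(U)=N(A)$; it is convergent if $\rho(U^{\dagger}V)<1$. A proper splitting is a proper nonnegative splitting of type I if $U^{\dagger}V\geq 0$, and of type II if $VU^{\dagger}\geq 0$. *)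

theory Defs
  imports "Jordan_Normal_Form.Spectral_Radius"
begin

definition is_mp_inverse :: "real mat \<Rightarrow> real mat \<Rightarrow> bool" where
  "is_mp_inverse A X \<longleftrightarrow> X \<in> carrier_mat (dim_col A) (dim_row A) \<and>
     A * X * A = A \<and> X * A * X = X \<and>
     transpose_mat (A * X) = A * X \<and> transpose_mat (X * A) = X * A"

definition mp_inverse :: "real mat \<Rightarrow> real mat" where
  "mp_inverse A = (THE X. is_mp_inverse A X)"

definition col_range :: "real mat \<Rightarrow> real vec set" where
  "col_range A = {mult_mat_vec A x | x. x \<in> carrier_vec (dim_col A)}"

definition null_space :: "real mat \<Rightarrow> real vec set" where
  "null_space A = {x \<in> carrier_vec (dim_col A). mult_mat_vec A x = 0\<^sub>v (dim_row A)}"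

definition mat_le :: "real mat \<Rightarrow> real mat \<Rightarrow> bool" where
  "mat_le X Y \<longleftrightarrow> dim_row X = dim_row Y \<and> dim_col X = dim_col Y \<and>
     (\<forall>i < dim_row X. \<forall>j < dim_col X. X $$ (i,j) \<le> Y $$ (i,j))"

definition mat_lt :: "real mat \<Rightarrow> real mat \<Rightarrow> bool" where
  "mat_lt X Y \<longleftrightarrow> dim_row X = dim_row Y \<and> dim_col X = dim_col Y \<and>
     (\<forall>i < dim_row X. \<forall>j < dim_col X. X $$ (i,j) < Y $$ (i,j))"

definition rho :: "real mat \<Rightarrow> real" where
  "rho M = spectral_radius (map_mat complex_of_real M)"

definition proper_splitting :: "real mat \<Rightarrow> real mat \<Rightarrow> real mat \<Rightarrow> bool" where
  "proper_splitting A U V \<longleftrightarrow>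
     U \<in> carrier_mat (dim_row A) (dim_col A) \<and> V \<in> carrier_mat (dim_row A) (dim_col A) \<and>
     A = U - V \<and> col_range U = col_range A \<and> null_space U = null_space A"

definition convergent_splitting :: "real mat \<Rightarrow> real mat \<Rightarrow> bool" where
  "convergent_splitting U V \<longleftrightarrow> rho (mp_inverse U * V) < 1"

definition proper_nonneg_splitting_I :: "real mat \<Rightarrow> real mat \<Rightarrow> real mat \<Rightarrow> bool" where
  "proper_nonneg_splitting_I A U V \<longleftrightarrow> proper_splitting A U V \<and>
     mat_le (0\<^sub>m (dim_col A) (dim_col A)) (mp_inverse U * V)"

definition proper_nonneg_splitting_II :: "real mat \<Rightarrow> real mat \<Rightarrow> real mat \<Rightarrow> bool" where
  "proper_nonneg_splitting_II A U V \<longleftrightarrow> proper_splitting A U V \<and>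
     mat_le (0\<^sub>m (dim_row A) (dim_row A)) (V * mp_inverse U)"

end

theory Submission
  imports Defs
begin


lemma ite10[simp]: "(if P then 1 else 0) * (x::'a::semiring_1) = (if P then x else 0)" by simp

lemma massoc: "dim_col A = dim_row B \<Longrightarrow> dim_col B = dim_row C \<Longrightarrow> A * B * C = A * (B * C)"
  by (rule assoc_mult_mat[of A "dim_row A" "dim_col A" B "dim_col B" C "dim_col C"], auto)

lemma ginv_exists:
  fixes A :: "'a :: field mat"
  assumes A: "A \<in> carrier_mat nr nc"
  shows "\<exists>Z \<in> carrier_mat nc nr. A * Z * A = A"
proof -
  define C where "C = gauss_jordan_single A"
  note g = gauss_jordan_single[OF A C_def[symmetric]]
  have Cc: "C \<in> carrier_mat nr nc" using g(2) .
  from g(3) obtain f where pf: "pivot_fun C f nc" unfolding row_echelon_form_def using Cc by auto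
  note pD = pivot_funD[OF _ pf, of nr] 
  from g(4) obtain P Q where CPA: "C = P * A" and P: "P \<in> carrier_mat nr nr" and Q: "Q \<in> carrier_mat nr nr"
    and QP: "Q * P = 1\<^sub>m nr" and PQ: "P * Q = 1\<^sub>m nr" by auto
  have QC: "Q * C = A" unfolding CPA using P Q A QP
    by (metis assoc_mult_mat left_mult_one_mat)
  define ZR where "ZR = mat nc nr (\<lambda>(j,i). if f i < nc \<and> j = f i then (1::'a) else 0)"
  have ZR: "ZR \<in> carrier_mat nc nr" unfolding ZR_def by auto
  have CZ: "(C * ZR) $$ (k,i) = (if i = k \<and> f k < nc then 1 else 0)" if k: "k < nr" and i: "i < nr" for k i
  proof -
    have "(C * ZR) $$ (k,i) = (\<Sum>j\<in>{0..<nc}. C $$ (k,j) * (if f i < nc \<and> j = f i then 1 else 0))"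
      using Cc ZR k i unfolding ZR_def by (auto simp: scalar_prod_def)
    also have "\<dots> = (if f i < nc then C $$ (k, f i) else 0)"
      by (auto simp: if_distrib cong: if_cong)
    also have "\<dots> = (if i = k \<and> f k < nc then 1 else 0)"
      using pD(4)[of i] pD(5)[of i k] Cc k i by auto
    finally show ?thesis .
  qed
  have CZC: "C * ZR * C = C"
  proof (rule eq_matI)
    show "dim_row (C * ZR * C) = dim_row C" "dim_col (C * ZR * C) = dim_col C" using Cc ZR by auto
    fix k l assume k: "k < dim_row C" and l: "l < dim_col C"
    hence k': "k < nr" and l': "l < nc" using Cc by auto
    have "(C * ZR * C) $$ (k,l) = row (C * ZR) k \<bullet> col C l"
      using Cc ZR k' l' by (intro index_mult_mat) auto
    also have "\<dots> = (\<Sum>i\<in>{0..<nr}. (C * ZR) $$ (k,i) * C $$ (i,l))"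
      unfolding scalar_prod_def using Cc ZR k' l' by (intro sum.cong) auto
    also have "\<dots> = (\<Sum>i\<in>{0..<nr}. (if i = k \<and> f k < nc then 1 else 0) * C $$ (i,l))"
      by (rule sum.cong, auto simp: CZ k')
    also have "\<dots> = (if f k < nc then C $$ (k,l) else 0)"
      using k' by (cases "f k < nc") auto
    also have "\<dots> = C $$ (k,l)"
      using pD(1)[of k] pD(2)[of k l] Cc k' l' by (cases "f k < nc", auto)
    finally show "(C * ZR * C) $$ (k,l) = C $$ (k,l)" .
  qed
  define Z where "Z = ZR * P"
  have Z: "Z \<in> carrier_mat nc nr" unfolding Z_def using ZR P by auto
  have PQX: "P * (Q * X) = X" if "X \<in> carrier_mat nr k" for X k
    using that P Q PQ by (simp flip: massoc)
  have CZC': "C * (ZR * C) = C" using CZC Cc ZR by (simp add: massoc)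
  have "A * Z * A = A"
    unfolding Z_def QC[symmetric] using Q Cc ZR P
    by (simp add: massoc PQX CZC')
  thus ?thesis using Z by auto
qed

lemma tmult: fixes A B :: "'a::comm_semiring_0 mat" shows "dim_col A = dim_row B \<Longrightarrow> transpose_mat (A * B) = transpose_mat B * transpose_mat A"
  by (rule transpose_mult[of A "dim_row A" "dim_col A" B "dim_col B"], auto)

lemma real_vec_self_zero:
  fixes u :: "real vec"
  assumes "u \<bullet> u = 0" shows "u = 0\<^sub>v (dim_vec u)"
proof -
  have "(\<Sum>i\<in>{0..<dim_vec u}. u $ i * u $ i) = 0" using assms unfolding scalar_prod_def by simp
  hence "\<forall>i\<in>{0..<dim_vec u}. u $ i * u $ i = 0" by (subst sum_nonneg_eq_0_iff[symmetric]) auto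
  thus ?thesis by (intro eq_vecI) auto
qed

lemma gram_zero:
  fixes B W :: "real mat"
  assumes B: "B \<in> carrier_mat r c" and W: "W \<in> carrier_mat c k"
    and z: "transpose_mat B * (B * W) = 0\<^sub>m c k"
  shows "B * W = 0\<^sub>m r k"
proof (rule eq_matI)
  fix i j assume i: "i < dim_row (0\<^sub>m r k)" and j: "j < dim_col (0\<^sub>m r k)"
  hence i': "i < r" and j': "j < k" by auto
  define w where "w = col W j"
  define u where "u = B *\<^sub>v w"
  have w: "w \<in> carrier_vec c" unfolding w_def using W by auto
  have u: "u \<in> carrier_vec r" unfolding u_def using mult_mat_vec_carrier[OF B w] .
  have "transpose_mat B *\<^sub>v u = col (transpose_mat B * (B * W)) j"
    unfolding u_def w_def using col_mult2[OF B W j'] col_mult2[of "transpose_mat B" c r "B * W" k j] B W j' by simp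
  also have "\<dots> = 0\<^sub>v c" using z j' by simp
  finally have "(transpose_mat B *\<^sub>v u) \<bullet> w = 0" using w by simp
  hence "u \<bullet> u = 0" using transpose_vec_mult_scalar[OF B w u] unfolding u_def by simp
  hence "u = 0\<^sub>v r" using real_vec_self_zero[of u] u by auto
  moreover have "(B * W) $$ (i,j) = u $ i" unfolding u_def w_def using B W i' j' by simp
  ultimately show "(B * W) $$ (i,j) = 0\<^sub>m r k $$ (i,j)" using i' j' by simp
qed (insert B W, auto)



lemma transpose_one_mat[simp]: "transpose_mat (1\<^sub>m n) = (1\<^sub>m n :: 'a::zero_neq_one mat)"
  by (rule eq_matI) auto

lemma mdistL: fixes A :: "'a :: ring mat"
  shows "dim_col A = dim_row B \<Longrightarrow> dim_row B = dim_row C \<Longrightarrow> dim_col B = dim_col C \<Longrightarrow> A * (B - C) = A * B - A * C"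
  by (rule mult_minus_distrib_mat[of A "dim_row A" "dim_col A" B "dim_col B" C], auto)
lemma mdistR: fixes A :: "'a :: ring mat"
  shows "dim_row A = dim_row B \<Longrightarrow> dim_col A = dim_col B \<Longrightarrow> dim_col A = dim_row C \<Longrightarrow> (A - B) * C = A * C - B * C"
  by (rule minus_mult_distrib_mat[of A "dim_row A" "dim_col A" B C "dim_col C"], auto)
lemma mdistL': fixes A :: "'a :: semiring_0 mat"
  shows "dim_col A = dim_row B \<Longrightarrow> dim_row B = dim_row C \<Longrightarrow> dim_col B = dim_col C \<Longrightarrow> A * (B + C) = A * B + A * C"
  by (rule mult_add_distrib_mat[of A "dim_row A" "dim_col A" B "dim_col B" C], auto)
lemma mdistR': fixes A :: "'a :: semiring_0 mat"
  shows "dim_row A = dim_row B \<Longrightarrow> dim_col A = dim_col B \<Longrightarrow> dim_col A = dim_row C \<Longrightarrow> (A + B) * C = A * C + B * C"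
  by (rule add_mult_distrib_mat[of A "dim_row A" "dim_col A" B C "dim_col C"], auto)

lemma mat_minus_eq0: fixes X Y :: "'a :: ab_group_add mat"
  assumes "X \<in> carrier_mat r k" "Y \<in> carrier_mat r k" "X - Y = 0\<^sub>m r k" shows "X = Y"
proof (rule eq_matI)
  fix i j assume ij: "i < dim_row Y" "j < dim_col Y"
  have d: "i < r" "j < k" using ij assms by auto
  have "X $$ (i,j) - Y $$ (i,j) = (X - Y) $$ (i,j)" using d assms(2) by simp
  also have "\<dots> = 0" unfolding assms(3) using d by simp
  finally show "X $$ (i,j) = Y $$ (i,j)" by simp
qed (insert assms, auto)

lemma gram_cancel:
  fixes B W1 W2 :: "real mat"
  assumes B: "B \<in> carrier_mat r c" and W1: "W1 \<in> carrier_mat c k" and W2: "W2 \<in> carrier_mat c k"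
    and z: "transpose_mat B * (B * W1) = transpose_mat B * (B * W2)"
  shows "B * W1 = B * W2"
proof -
  have "transpose_mat B * (B * (W1 - W2)) = transpose_mat B * (B * W1) - transpose_mat B * (B * W2)"
    using B W1 W2 by (simp add: mdistL)
  also have "\<dots> = 0\<^sub>m c k" using z B W2 by simp
  moreover have Wc: "W1 - W2 \<in> carrier_mat c k" using W2 by auto
  ultimately have "B * (W1 - W2) = 0\<^sub>m r k" using gram_zero[OF B Wc] by simp
  hence "B * W1 - B * W2 = 0\<^sub>m r k" using B W1 W2 by (simp add: mdistL)
  thus ?thesis using mat_minus_eq0[OF mult_carrier_mat[OF B W1] mult_carrier_mat[OF B W2]] by blast
qed

lemma ginv_range:
  fixes A Z :: "real mat"
  assumes A: "A \<in> carrier_mat m n" and Z: "Z \<in> carrier_mat m m"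
    and g: "(A * transpose_mat A) * Z * (A * transpose_mat A) = A * transpose_mat A"
  shows "transpose_mat A * Z * A * transpose_mat A = transpose_mat A"
proof -
  let ?B = "transpose_mat A"
  have B: "?B \<in> carrier_mat n m" using A by auto
  have e: "transpose_mat ?B * (?B * (Z * (A * ?B))) = transpose_mat ?B * (?B * 1\<^sub>m m)"
    using g A Z by (simp add: massoc)
  have "?B * (Z * (A * ?B)) = ?B * 1\<^sub>m m"
    by (rule gram_cancel[OF B _ _ e]) (insert A Z, auto)
  thus ?thesis using A Z by (simp add: massoc)
qed

lemma mp_exists:
  fixes A :: "real mat"
  assumes A: "A \<in> carrier_mat m n"
  shows "\<exists>X. is_mp_inverse A X"
proof -
  let ?At = "transpose_mat A"
  have At: "?At \<in> carrier_mat n m" using A by auto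
  have AAt: "A * ?At \<in> carrier_mat m m" using A by auto
  have AtA: "?At * A \<in> carrier_mat n n" using A by auto
  from ginv_exists[OF AAt] obtain Z1 where Z1: "Z1 \<in> carrier_mat m m"
    and g1: "(A * ?At) * Z1 * (A * ?At) = A * ?At" by auto
  from ginv_exists[OF AtA] obtain Z2 where Z2: "Z2 \<in> carrier_mat n n"
    and g2: "(?At * A) * Z2 * (?At * A) = ?At * A" by auto
  have R1: "?At * Z1 * A * ?At = ?At" by (rule ginv_range[OF A Z1 g1])
  have g2': "(?At * transpose_mat ?At) * Z2 * (?At * transpose_mat ?At) = ?At * transpose_mat ?At"
    using g2 by simp
  have R2': "transpose_mat ?At * Z2 * ?At * transpose_mat ?At = transpose_mat ?At"
    by (rule ginv_range[OF At Z2 g2'])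
  hence R2: "A * Z2 * ?At * A = A" by simp
  have R1t: "A * ?At * transpose_mat Z1 * A = A"
  proof -
    have "transpose_mat (?At * Z1 * A * ?At) = transpose_mat ?At" using R1 by simp
    thus ?thesis using A Z1 by (simp add: tmult massoc)
  qed
  have R2t: "?At * A * transpose_mat Z2 * ?At = ?At"
  proof -
    have "transpose_mat (A * Z2 * ?At * A) = ?At" using R2 by simp
    thus ?thesis using A Z2 by (simp add: tmult massoc)
  qed
  define P where "P = A * Z2 * ?At"
  define Q where "Q = ?At * Z1 * A"
  have Pc: "P \<in> carrier_mat m m" unfolding P_def using A Z2 by auto
  have Qc: "Q \<in> carrier_mat n n" unfolding Q_def using A Z1 by auto
  have Psym: "transpose_mat P = P"
  proof -
    have "P = A * Z2 * (?At * A * transpose_mat Z2 * ?At)" unfolding P_def using R2t by simp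
    also have "\<dots> = (A * Z2 * ?At * A) * transpose_mat Z2 * ?At" using A Z2 by (simp add: massoc)
    also have "\<dots> = A * transpose_mat Z2 * ?At" using R2 by simp
    also have "\<dots> = transpose_mat P" unfolding P_def using A Z2 by (simp add: tmult massoc)
    finally show ?thesis by simp
  qed
  have Qsym: "transpose_mat Q = Q"
  proof -
    have "Q = ?At * Z1 * (A * ?At * transpose_mat Z1 * A)" unfolding Q_def using R1t by simp
    also have "\<dots> = (?At * Z1 * A * ?At) * transpose_mat Z1 * A" using A Z1 by (simp add: massoc)
    also have "\<dots> = ?At * transpose_mat Z1 * A" using R1 by simp
    also have "\<dots> = transpose_mat Q" unfolding Q_def using A Z1 by (simp add: tmult massoc)
    finally show ?thesis by simp
  qed
  have AQ: "A * Q = A"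
  proof -
    have "Q * ?At = ?At" unfolding Q_def using R1 .
    hence "transpose_mat (Q * ?At) = A" by simp
    thus ?thesis using Qsym Qc A by (simp add: tmult)
  qed
  define X where "X = ?At * Z1 * A * Z2 * ?At"
  have Xc: "X \<in> carrier_mat n m" unfolding X_def using A Z1 Z2 by auto
  have AX: "A * X = P"
  proof -
    have "A * X = (A * Q) * Z2 * ?At" unfolding X_def Q_def using A Z1 Z2 by (simp add: massoc)
    thus ?thesis unfolding AQ P_def .
  qed
  have XA: "X * A = Q"
  proof -
    have "X * A = ?At * Z1 * (A * Z2 * ?At * A)" unfolding X_def using A Z1 Z2 by (simp add: massoc)
    thus ?thesis unfolding R2 Q_def .
  qed
  have "is_mp_inverse A X"
    unfolding is_mp_inverse_def
  proof (intro conjI)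
    show "X \<in> carrier_mat (dim_col A) (dim_row A)" using Xc A by auto
    show "A * X * A = A" unfolding AX P_def using R2 .
    show "X * A * X = X"
    proof -
      have "X * A * X = Q * X" using XA by simp
      also have "\<dots> = (Q * ?At) * Z1 * A * Z2 * ?At" unfolding Q_def X_def using A Z1 Z2 by (simp add: massoc)
      also have "\<dots> = X" unfolding X_def using R1 unfolding Q_def by simp
      finally show ?thesis .
    qed
    show "transpose_mat (A * X) = A * X" unfolding AX using Psym .
    show "transpose_mat (X * A) = X * A" unfolding XA using Qsym .
  qed
  thus ?thesis by blast
qed

lemma mp_unique:
  fixes A X Y :: "real mat"
  assumes X: "is_mp_inverse A X" and Y: "is_mp_inverse A Y"
  shows "X = Y"
proof -
  define m n where "m = dim_row A" and "n = dim_col A"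
  have A: "A \<in> carrier_mat m n" unfolding m_def n_def by auto
  have Xc: "X \<in> carrier_mat n m" and Yc: "Y \<in> carrier_mat n m"
    using X Y unfolding is_mp_inverse_def m_def n_def by auto
  note x = X[unfolded is_mp_inverse_def] and y = Y[unfolded is_mp_inverse_def]
  have "X = X * (A * X)" using x Xc A by (simp add: massoc)
  also have "\<dots> = X * transpose_mat (A * X)" using x by simp
  also have "\<dots> = X * (transpose_mat X * transpose_mat A)" using Xc A by (simp add: tmult)
  also have "transpose_mat A = transpose_mat (A * Y * A)" using y by simp
  also have "\<dots> = transpose_mat A * transpose_mat (A * Y)" using Yc A by (simp add: tmult)
  also have "transpose_mat (A * Y) = A * Y" using y by simp
  also have "X * (transpose_mat X * (transpose_mat A * (A * Y))) = X * transpose_mat (A * X) * (A * Y)"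
    using Xc Yc A by (simp add: tmult massoc)
  also have "transpose_mat (A * X) = A * X" using x by simp
  also have "X * (A * X) * (A * Y) = X * A * Y" using x Xc Yc A by (simp add: massoc)
  finally have 1: "X = X * A * Y" .
  have "Y = (Y * A) * Y" using y by simp
  also have "\<dots> = transpose_mat (Y * A) * Y" using y by simp
  also have "\<dots> = (transpose_mat A * transpose_mat Y) * Y" using Yc A by (simp add: tmult)
  also have "transpose_mat A = transpose_mat (A * X * A)" using x by simp
  also have "\<dots> = transpose_mat (X * A) * transpose_mat A" using Xc A by (simp add: tmult massoc)
  also have "transpose_mat (X * A) = X * A" using x by simp
  also have "(X * A * transpose_mat A * transpose_mat Y) * Y = X * A * transpose_mat (Y * A) * Y"
    using Xc Yc A by (simp add: tmult massoc)
  also have "transpose_mat (Y * A) = Y * A" using y by simp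
  also have "X * A * (Y * A) * Y = X * A * Y" using y Xc Yc A by (simp add: massoc)
  finally have 2: "Y = X * A * Y" .
  show ?thesis using 1 2 by simp
qed

lemma mp_inverse_is:
  fixes A :: "real mat"
  shows "is_mp_inverse A (mp_inverse A)"
proof -
  obtain X where X: "is_mp_inverse A X" using mp_exists[of A "dim_row A" "dim_col A"] by auto
  show ?thesis unfolding mp_inverse_def
    by (rule theI[of _ X], rule X, rule mp_unique[OF _ X])
qed



lemma col_unit: fixes X :: "'a :: semiring_1 mat" shows "j < dim_col X \<Longrightarrow> col X j = X *\<^sub>v unit_vec (dim_col X) j"
  by (rule eq_vecI) (auto simp: row_def col_def scalar_prod_right_unit)

lemma mvassoc: fixes A :: "'a :: semiring_0 mat"
  shows "dim_col A = dim_row B \<Longrightarrow> dim_col B = dim_vec v \<Longrightarrow> (A * B) *\<^sub>v v = A *\<^sub>v (B *\<^sub>v v)"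
  by (rule assoc_mult_mat_vec[of A "dim_row A" "dim_col A" B "dim_col B"], auto)

lemma colm: fixes A :: "'a :: semiring_0 mat"
  shows "dim_col A = dim_row B \<Longrightarrow> j < dim_col B \<Longrightarrow> col (A * B) j = A *\<^sub>v col B j"
  by (rule col_mult2[of A "dim_row A" "dim_col A" B "dim_col B"], auto)

lemma vec_minus_eq0: fixes a b :: "'a :: ab_group_add vec"
  assumes "a \<in> carrier_vec l" "b \<in> carrier_vec l" "a - b = 0\<^sub>v l" shows "b = a"
proof (rule eq_vecI)
  fix i assume i: "i < dim_vec a"
  hence i': "i < l" using assms by auto
  have "a $ i - b $ i = (a - b) $ i" using i' assms(2) by simp
  also have "\<dots> = 0" unfolding assms(3) using i' by simp
  finally show "b $ i = a $ i" by simp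
qed (insert assms, auto)

lemma range_lemma:
  fixes X Y W :: "real mat"
  assumes Y: "Y \<in> carrier_mat m k" and X: "X \<in> carrier_mat m l" and W: "W \<in> carrier_mat k m"
    and g: "Y * W * Y = Y" and sub: "col_range X \<subseteq> col_range Y"
  shows "Y * W * X = X"
proof (rule mat_col_eqI)
  fix j assume j: "j < dim_col X"
  have "col X j \<in> col_range X" unfolding col_range_def using col_unit[OF j] X by auto
  with sub have "col X j \<in> col_range Y" by blast
  then obtain x where x0: "x \<in> carrier_vec (dim_col Y)" and cx: "col X j = Y *\<^sub>v x"
    unfolding col_range_def by blast
  have x: "x \<in> carrier_vec k" using x0 Y by simp
  have "col (Y * W * X) j = (Y * W) *\<^sub>v col X j" by (rule colm) (insert Y W X j, auto)
  also have "\<dots> = (Y * W * Y) *\<^sub>v x" unfolding cx using Y W x by (simp add: mvassoc)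
  also have "\<dots> = Y *\<^sub>v x" by (simp only: g)
  also have "\<dots> = col X j" by (simp only: cx)
  finally show "col (Y * W * X) j = col X j" .
qed (insert X Y W, simp_all)

lemma null_lemma:
  fixes X Y W :: "real mat"
  assumes Y: "Y \<in> carrier_mat m k" and X: "X \<in> carrier_mat l k" and W: "W \<in> carrier_mat k m"
    and g: "Y * W * Y = Y" and sub: "null_space Y \<subseteq> null_space X"
  shows "X * W * Y = X"
proof (rule mat_col_eqI)
  fix j assume j: "j < dim_col X"
  hence j': "j < k" using X by auto
  define e where "e = (unit_vec k j :: real vec)"
  have e: "e \<in> carrier_vec k" unfolding e_def by auto
  have WY: "W * Y \<in> carrier_mat k k" using W Y by auto
  have we: "(W * Y) *\<^sub>v e \<in> carrier_vec k" using mult_mat_vec_carrier[OF WY e] .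
  define u where "u = e - (W * Y) *\<^sub>v e"
  have u: "u \<in> carrier_vec k" unfolding u_def using e we by simp
  have "Y *\<^sub>v u = Y *\<^sub>v e - Y *\<^sub>v ((W * Y) *\<^sub>v e)" unfolding u_def
    by (rule mult_minus_distrib_mat_vec[OF Y e we])
  also have "Y *\<^sub>v ((W * Y) *\<^sub>v e) = (Y * (W * Y)) *\<^sub>v e"
    by (rule assoc_mult_mat_vec[symmetric, OF Y WY e])
  also have "Y * (W * Y) = Y * W * Y" by (rule assoc_mult_mat[symmetric, OF Y W Y])
  also have "\<dots> = Y" by (rule g)
  also have "Y *\<^sub>v e - Y *\<^sub>v e = 0\<^sub>v m" by (rule minus_cancel_vec, rule mult_mat_vec_carrier[OF Y e])
  finally have Yu: "Y *\<^sub>v u = 0\<^sub>v m" .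
  have "u \<in> null_space Y" unfolding null_space_def using u Y Yu by simp
  with sub have "u \<in> null_space X" by blast
  hence Xu: "X *\<^sub>v u = 0\<^sub>v l" unfolding null_space_def using X by simp
  have "X *\<^sub>v u = X *\<^sub>v e - X *\<^sub>v ((W * Y) *\<^sub>v e)" unfolding u_def
    by (rule mult_minus_distrib_mat_vec[OF X e we])
  also have "X *\<^sub>v ((W * Y) *\<^sub>v e) = (X * (W * Y)) *\<^sub>v e"
    by (rule assoc_mult_mat_vec[symmetric, OF X WY e])
  also have "X * (W * Y) = X * W * Y" by (rule assoc_mult_mat[symmetric, OF X W Y])
  finally have h: "X *\<^sub>v e - (X * W * Y) *\<^sub>v e = 0\<^sub>v l" using Xu by simp
  have XWY: "X * W * Y \<in> carrier_mat l k" using X W Y by auto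
  have ee: "(X * W * Y) *\<^sub>v e = X *\<^sub>v e"
    by (rule vec_minus_eq0[OF mult_mat_vec_carrier[OF X e] mult_mat_vec_carrier[OF XWY e] h])
  have "col (X * W * Y) j = (X * W * Y) *\<^sub>v unit_vec (dim_col (X * W * Y)) j"
    by (rule col_unit) (insert Y j', simp)
  also have "dim_col (X * W * Y) = k" using Y by simp
  also have "(X * W * Y) *\<^sub>v unit_vec k j = X *\<^sub>v unit_vec k j" using ee unfolding e_def .
  also have "\<dots> = col X j" using col_unit[OF j] X by simp
  finally show "col (X * W * Y) j = col X j" .
qed (insert X Y W, simp_all)

lemma proj_eq:
  fixes P Q :: "real mat"
  assumes P: "P \<in> carrier_mat m m" and Q: "Q \<in> carrier_mat m m"
    and Ps: "transpose_mat P = P" and Qs: "transpose_mat Q = Q"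
    and PQ: "P * Q = Q" and QP: "Q * P = P"
  shows "P = Q"
proof -
  have "P = transpose_mat (Q * P)" using QP Ps by simp
  also have "\<dots> = transpose_mat P * transpose_mat Q" using P Q by (simp add: tmult)
  also have "\<dots> = Q" using Ps Qs PQ by simp
  finally show ?thesis .
qed



lemma proj_eq':
  fixes P Q :: "real mat"
  assumes P: "P \<in> carrier_mat m m" and Q: "Q \<in> carrier_mat m m"
    and Ps: "transpose_mat P = P" and Qs: "transpose_mat Q = Q"
    and PQ: "P * Q = P" and QP: "Q * P = Q"
  shows "P = Q"
proof -
  have "P = transpose_mat (P * Q)" using PQ Ps by simp
  also have "\<dots> = transpose_mat Q * transpose_mat P" using P Q by (simp add: tmult)
  also have "\<dots> = Q" using Ps Qs QP by simp
  finally show ?thesis .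
qed

lemma mp_facts:
  fixes A :: "real mat"
  assumes A: "A \<in> carrier_mat m n"
  shows "mp_inverse A \<in> carrier_mat n m" "A * mp_inverse A * A = A"
    "mp_inverse A * A * mp_inverse A = mp_inverse A"
    "transpose_mat (A * mp_inverse A) = A * mp_inverse A"
    "transpose_mat (mp_inverse A * A) = mp_inverse A * A"
  using mp_inverse_is[of A] A unfolding is_mp_inverse_def by auto

lemma split_V: fixes A U V :: "real mat"
  assumes "U \<in> carrier_mat m n" "V \<in> carrier_mat m n" "A = U - V"
  shows "V = U - A"
  by (rule eq_matI) (insert assms, auto)

lemma split_facts:
  fixes A U V :: "real mat"
  assumes A: "A \<in> carrier_mat m n" and ps: "proper_splitting A U V"
  shows "U \<in> carrier_mat m n" "V \<in> carrier_mat m n"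
    "(mp_inverse U * V) * mp_inverse A = mp_inverse A - mp_inverse U"
    "mp_inverse A * (V * mp_inverse U) = mp_inverse A - mp_inverse U"
    "mp_inverse U * V = mp_inverse A * (A * (mp_inverse U * V))"
    "V * mp_inverse U = ((V * mp_inverse U) * A) * mp_inverse A"
proof -
  note p = ps[unfolded proper_splitting_def]
  have U: "U \<in> carrier_mat m n" and V: "V \<in> carrier_mat m n" using p A by auto
  thus "U \<in> carrier_mat m n" "V \<in> carrier_mat m n" by auto
  have AUV: "A = U - V" using p by blast
  have VUA: "V = U - A" using split_V[OF U V AUV] .
  have cr: "col_range U = col_range A" and ns: "null_space U = null_space A" using p by blast+
  let ?Ad = "mp_inverse A" and ?Ud = "mp_inverse U"
  note a = mp_facts[OF A] and u = mp_facts[OF U]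
  have Ad: "?Ad \<in> carrier_mat n m" and Ud: "?Ud \<in> carrier_mat n m" using a u by auto
  have s1: "col_range A \<subseteq> col_range U" and s2: "col_range U \<subseteq> col_range A"
    and s3: "null_space U \<subseteq> null_space A" and s4: "null_space A \<subseteq> null_space U"
    using cr ns by blast+
  have H1: "U * ?Ud * A = A" by (rule range_lemma[OF U A Ud u(2) s1])
  have H2: "A * ?Ad * U = U" by (rule range_lemma[OF A U Ad a(2) s2])
  have H3: "A * ?Ud * U = A" by (rule null_lemma[OF U A Ud u(2) s3])
  have H4: "U * ?Ad * A = U" by (rule null_lemma[OF A U Ad a(2) s4])
  have UUd: "U * ?Ud \<in> carrier_mat m m" and AAd: "A * ?Ad \<in> carrier_mat m m"
    and UdU: "?Ud * U \<in> carrier_mat n n" and AdA: "?Ad * A \<in> carrier_mat n n"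
    using U Ud A Ad by auto
  have P1: "U * ?Ud = A * ?Ad"
  proof (rule proj_eq[OF UUd AAd u(4) a(4)])
    have "U * ?Ud * (A * ?Ad) = (U * ?Ud * A) * ?Ad" by (rule assoc_mult_mat[symmetric, OF UUd A Ad])
    thus "U * ?Ud * (A * ?Ad) = A * ?Ad" unfolding H1 .
    have "A * ?Ad * (U * ?Ud) = (A * ?Ad * U) * ?Ud" by (rule assoc_mult_mat[symmetric, OF AAd U Ud])
    thus "A * ?Ad * (U * ?Ud) = U * ?Ud" unfolding H2 .
  qed
  have P2: "?Ud * U = ?Ad * A"
  proof (rule proj_eq'[OF UdU AdA u(5) a(5)])
    have "?Ud * U * (?Ad * A) = ?Ud * (U * ?Ad * A)" using U Ud A Ad by (simp add: massoc)
    thus "?Ud * U * (?Ad * A) = ?Ud * U" unfolding H4 .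
    have "?Ad * A * (?Ud * U) = ?Ad * (A * ?Ud * U)" using U Ud A Ad by (simp add: massoc)
    thus "?Ad * A * (?Ud * U) = ?Ad * A" unfolding H3 .
  qed
  have E1: "?Ud * (U * ?Ad) = ?Ad"
  proof -
    have "?Ud * (U * ?Ad) = (?Ud * U) * ?Ad" using U Ud Ad by (simp add: massoc)
    also have "\<dots> = ?Ad * A * ?Ad" using P2 by simp
    also have "\<dots> = ?Ad" using a by simp
    finally show ?thesis .
  qed
  have E2: "?Ud * (A * ?Ad) = ?Ud"
  proof -
    have "?Ud * (A * ?Ad) = ?Ud * (U * ?Ud)" using P1 by simp
    also have "\<dots> = ?Ud * U * ?Ud" using U Ud by (simp add: massoc)
    also have "\<dots> = ?Ud" using u by simp
    finally show ?thesis .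
  qed
  have E3: "?Ad * (U * ?Ud) = ?Ad"
  proof -
    have "?Ad * (U * ?Ud) = ?Ad * (A * ?Ad)" using P1 by simp
    also have "\<dots> = ?Ad * A * ?Ad" using A Ad by (simp add: massoc)
    also have "\<dots> = ?Ad" using a by simp
    finally show ?thesis .
  qed
  have E4: "?Ad * (A * ?Ud) = ?Ud"
  proof -
    have "?Ad * (A * ?Ud) = (?Ad * A) * ?Ud" using A Ad Ud by (simp add: massoc)
    also have "\<dots> = ?Ud * U * ?Ud" using P2 by simp
    also have "\<dots> = ?Ud" using u by simp
    finally show ?thesis .
  qed
  show "(?Ud * V) * ?Ad = ?Ad - ?Ud"
  proof -
    have "(?Ud * V) * ?Ad = ?Ud * ((U - A) * ?Ad)" using VUA U V Ud Ad by (simp add: massoc)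
    also have "\<dots> = ?Ud * (U * ?Ad) - ?Ud * (A * ?Ad)" using U A Ud Ad by (simp add: mdistL mdistR)
    also have "\<dots> = ?Ad - ?Ud" using E1 E2 by simp
    finally show ?thesis .
  qed
  show "?Ad * (V * ?Ud) = ?Ad - ?Ud"
  proof -
    have "?Ad * (V * ?Ud) = ?Ad * ((U - A) * ?Ud)" using VUA by simp
    also have "\<dots> = ?Ad * (U * ?Ud) - ?Ad * (A * ?Ud)" using U A Ud Ad by (simp add: mdistL mdistR)
    also have "\<dots> = ?Ad - ?Ud" using E3 E4 by simp
    finally show ?thesis .
  qed
  show "?Ud * V = ?Ad * (A * (?Ud * V))"
  proof -
    have "?Ud * V = (?Ud * U * ?Ud) * V" using u by simp
    also have "\<dots> = (?Ad * A) * ?Ud * V" using P2 by simp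
    also have "\<dots> = ?Ad * (A * (?Ud * V))" using A Ad Ud V by (simp add: massoc)
    finally show ?thesis .
  qed
  show "V * ?Ud = ((V * ?Ud) * A) * ?Ad"
  proof -
    have "V * ?Ud = V * (?Ud * U * ?Ud)" using u by simp
    also have "\<dots> = V * (?Ud * (U * ?Ud))" using U Ud by (simp add: massoc)
    also have "\<dots> = V * (?Ud * (A * ?Ad))" using P1 by simp
    also have "\<dots> = ((V * ?Ud) * A) * ?Ad" using A Ad Ud V by (simp add: massoc)
    finally show ?thesis .
  qed
qed



abbreviation mc :: "real mat \<Rightarrow> complex mat" where "mc M \<equiv> map_mat complex_of_real M"

lemma rho_ev: assumes M: "M \<in> carrier_mat k k" and k: "k > 0"
  shows "\<exists>l. eigenvalue (mc M) l \<and> norm l = rho M"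
proof -
  have Mc: "mc M \<in> carrier_mat k k" using M by auto
  from spectral_radius_mem_max(1)[OF Mc k] show ?thesis
    unfolding rho_def spectrum_def by auto
qed

lemma rho_ge: assumes M: "M \<in> carrier_mat k k" and ev: "eigenvalue (mc M) l"
  shows "norm l \<le> rho M"
proof -
  have Mc: "mc M \<in> carrier_mat k k" using M by auto
  have k: "k > 0" by (rule eigenvalue_imp_nonzero_dim[OF Mc ev])
  show ?thesis unfolding rho_def
    by (rule spectral_radius_mem_max(2)[OF Mc k]) (insert ev, auto simp: spectrum_def)
qed

lemma rho_nonneg: assumes M: "M \<in> carrier_mat k k" and k: "k > 0" shows "0 \<le> rho M"
  using rho_ev[OF M k] by (metis norm_ge_zero)

lemma rho_transpose: assumes M: "M \<in> carrier_mat k k"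
  shows "rho (transpose_mat M) = rho M"
proof -
  have Mc: "mc M \<in> carrier_mat k k" using M by auto
  have t: "mc (transpose_mat M) = transpose_mat (mc M)" by (simp add: map_mat_transpose)
  have "spectrum (mc (transpose_mat M)) = spectrum (mc M)"
    unfolding spectrum_def t
    using eigenvalue_root_char_poly[OF Mc] eigenvalue_root_char_poly[of "transpose_mat (mc M)" k]
      char_poly_transpose_mat[OF Mc] Mc by auto
  thus ?thesis unfolding rho_def spectral_radius_def by simp
qed

lemma ev_comm: fixes X Y :: "real mat"
  assumes X: "X \<in> carrier_mat n m" and Y: "Y \<in> carrier_mat m n"
    and ev: "eigenvalue (mc (X * Y)) l" and l: "l \<noteq> 0"
  shows "eigenvalue (mc (Y * X)) l"
proof -
  have XY: "mc (X * Y) = mc X * mc Y" by (rule of_real_hom.mat_hom_mult[OF X Y])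
  have YX: "mc (Y * X) = mc Y * mc X" by (rule of_real_hom.mat_hom_mult[OF Y X])
  have Xc: "mc X \<in> carrier_mat n m" and Yc: "mc Y \<in> carrier_mat m n" using X Y by auto
  from ev obtain v where v: "eigenvector (mc (X * Y)) v l" unfolding eigenvalue_def by auto
  hence vc: "v \<in> carrier_vec n" and v0: "v \<noteq> 0\<^sub>v n" and ve: "(mc X * mc Y) *\<^sub>v v = l \<cdot>\<^sub>v v"
    unfolding eigenvector_def XY using X Y by auto
  define w where "w = mc Y *\<^sub>v v"
  have wc: "w \<in> carrier_vec m" unfolding w_def using Yc vc by auto
  have Xw: "mc X *\<^sub>v w = l \<cdot>\<^sub>v v" unfolding w_def using ve assoc_mult_mat_vec[OF Xc Yc vc] by simp
  have w0: "w \<noteq> 0\<^sub>v m"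
  proof
    assume "w = 0\<^sub>v m"
    moreover have z: "mc X *\<^sub>v 0\<^sub>v m = 0\<^sub>v n" using Xc by (intro eq_vecI) (auto simp: scalar_prod_def)
    ultimately have "l \<cdot>\<^sub>v v = 0\<^sub>v n" using Xw by simp
    hence "v = 0\<^sub>v n"
    proof (intro eq_vecI)
      fix i assume lv: "l \<cdot>\<^sub>v v = 0\<^sub>v n" and i: "i < dim_vec (0\<^sub>v n :: complex vec)"
      have "l * v $ i = (l \<cdot>\<^sub>v v) $ i" using i vc by simp
      also have "\<dots> = 0" using lv i by simp
      finally show "v $ i = 0\<^sub>v n $ i" using l i by simp
    qed (insert vc, auto)
    thus False using v0 by simp
  qed
  have "(mc Y * mc X) *\<^sub>v w = mc Y *\<^sub>v (mc X *\<^sub>v w)" using assoc_mult_mat_vec[OF Yc Xc wc] .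
  also have "\<dots> = mc Y *\<^sub>v (l \<cdot>\<^sub>v v)" by (simp only: Xw)
  also have "\<dots> = l \<cdot>\<^sub>v w" unfolding w_def by (rule mult_mat_vec[OF Yc vc])
  finally have "eigenvector (mc (Y * X)) w l" unfolding eigenvector_def YX using wc w0 Yc Xc by auto
  thus ?thesis unfolding eigenvalue_def by auto
qed

lemma rho_comm_le: fixes X Y :: "real mat"
  assumes X: "X \<in> carrier_mat n m" and Y: "Y \<in> carrier_mat m n" and n: "n > 0" and m: "m > 0"
  shows "rho (X * Y) \<le> rho (Y * X)"
proof -
  have XY: "X * Y \<in> carrier_mat n n" and YX: "Y * X \<in> carrier_mat m m" using X Y by auto
  obtain l where ev: "eigenvalue (mc (X * Y)) l" and nl: "norm l = rho (X * Y)" using rho_ev[OF XY n] by auto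
  show ?thesis
  proof (cases "l = 0")
    case True thus ?thesis using nl rho_nonneg[OF YX m] by simp
  next
    case False
    from rho_ge[OF YX ev_comm[OF X Y ev False]] nl show ?thesis by simp
  qed
qed

lemma rho_comm: fixes X Y :: "real mat"
  assumes X: "X \<in> carrier_mat n m" and Y: "Y \<in> carrier_mat m n" and n: "n > 0" and m: "m > 0"
  shows "rho (X * Y) = rho (Y * X)"
  using rho_comm_le[OF X Y n m] rho_comm_le[OF Y X m n] by simp



lemma smv: fixes A :: "'a :: comm_ring_1 mat"
  assumes A: "A \<in> carrier_mat nr nc" and v: "v \<in> carrier_vec nc"
  shows "(k \<cdot>\<^sub>m A) *\<^sub>v v = k \<cdot>\<^sub>v (A *\<^sub>v v)"
  by (rule eq_vecI) (insert A v, auto simp: scalar_prod_def sum_distrib_left mult.assoc)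

lemma smult_pow: fixes A :: "'a :: comm_ring_1 mat"
  assumes A: "A \<in> carrier_mat n n"
  shows "(k \<cdot>\<^sub>m A) ^\<^sub>m i = k ^ i \<cdot>\<^sub>m (A ^\<^sub>m i)"
proof (induction i)
  case 0 show ?case using A by (intro eq_matI) auto
next
  case (Suc i)
  have "(k \<cdot>\<^sub>m A) ^\<^sub>m Suc i = (k ^ i \<cdot>\<^sub>m (A ^\<^sub>m i)) * (k \<cdot>\<^sub>m A)" using Suc by simp
  also have "\<dots> = k ^ Suc i \<cdot>\<^sub>m (A ^\<^sub>m Suc i)"
    by (rule eq_matI) (insert A, auto simp: scalar_prod_def sum_distrib_left ac_simps)
  finally show ?case .
qed

lemma growth:
  fixes S :: "real mat" and a :: "nat \<Rightarrow> nat \<Rightarrow> real"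
  assumes S: "S \<in> carrier_mat m m" and c: "c > 0" and K0: "K0 > 0"
    and a: "\<And>l j. l < m \<Longrightarrow> j < m \<Longrightarrow> 0 \<le> a l j"
    and g: "\<And>k. c ^ k * K0 \<le> (\<Sum>l<m. \<Sum>j<m. a l j * (S ^\<^sub>m k) $$ (l,j))"
  shows "c \<le> rho S"
proof (rule ccontr)
  assume "\<not> c \<le> rho S"
  hence lt: "rho S < c" by simp
  have m: "m > 0"
  proof (rule ccontr)
    assume "\<not> m > 0" hence "m = 0" by simp
    with g[of 0] K0 show False by simp
  qed
  have r0: "0 \<le> rho S" by (rule rho_nonneg[OF S m])
  define r where "r = (rho S + c) / 2"
  have r: "r > 0" "rho S < r" "r < c" unfolding r_def using r0 lt by auto
  define B where "B = complex_of_real (1 / r) \<cdot>\<^sub>m mc S"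
  have Sc: "mc S \<in> carrier_mat m m" using S by auto
  have Bc: "B \<in> carrier_mat m m" unfolding B_def using S by auto
  have SB: "mc S = complex_of_real r \<cdot>\<^sub>m B"
    unfolding B_def by (rule eq_matI) (insert r(1) S, auto simp: of_real_mult)
  have "spectral_radius B \<in> norm ` spectrum B" by (rule spectral_radius_mem_max(1)[OF Bc m])
  then obtain mu where ev: "eigenvalue B mu" and nm: "norm mu = spectral_radius B"
    unfolding spectrum_def by auto
  from ev obtain v where v: "eigenvector B v mu" unfolding eigenvalue_def by auto
  hence vc: "v \<in> carrier_vec m" and v0: "v \<noteq> 0\<^sub>v m" and Bv: "B *\<^sub>v v = mu \<cdot>\<^sub>v v"
    unfolding eigenvector_def using Bc by auto
  have "mc S *\<^sub>v v = complex_of_real r \<cdot>\<^sub>v (B *\<^sub>v v)" unfolding SB by (rule smv[OF Bc vc])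
  also have "\<dots> = (complex_of_real r * mu) \<cdot>\<^sub>v v" unfolding Bv by (simp add: smult_smult_assoc)
  finally have "eigenvector (mc S) v (complex_of_real r * mu)"
    unfolding eigenvector_def using vc v0 Sc by auto
  hence "eigenvalue (mc S) (complex_of_real r * mu)" unfolding eigenvalue_def by auto
  from rho_ge[OF S this] have "r * norm mu \<le> rho S" using r(1) by (simp add: norm_mult)
  hence "r * norm mu < r * 1" using r(2) by linarith
  hence "norm mu < 1" using r(1) by (simp only: mult_less_cancel_left_pos)
  hence "spectral_radius B < 1" using nm by simp
  from spectral_radius_jnf_norm_bound_less_1_upper_triangular[OF Bc this]
  obtain C where nb: "\<And>k. norm_bound (B ^\<^sub>m k) C" by auto
  have bound: "(S ^\<^sub>m k) $$ (l,j) \<le> C * r ^ k" if l: "l < m" and j: "j < m" for k l j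
  proof -
    have "B ^\<^sub>m k = complex_of_real (1/r) ^ k \<cdot>\<^sub>m (mc S ^\<^sub>m k)" unfolding B_def by (rule smult_pow[OF Sc])
    also have "mc S ^\<^sub>m k = mc (S ^\<^sub>m k)" by (rule of_real_hom.mat_hom_pow[OF S, symmetric])
    finally have Bk: "B ^\<^sub>m k = complex_of_real (1/r) ^ k \<cdot>\<^sub>m mc (S ^\<^sub>m k)" .
    have "norm ((B ^\<^sub>m k) $$ (l,j)) \<le> C" using nb[of k] l j Bc unfolding norm_bound_def by auto
    also have "(B ^\<^sub>m k) $$ (l,j) = complex_of_real ((1/r) ^ k * (S ^\<^sub>m k) $$ (l,j))"
      unfolding Bk using l j S by simp
    finally have h: "norm (complex_of_real ((1/r) ^ k * (S ^\<^sub>m k) $$ (l,j))) \<le> C" .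
    hence h2: "\<bar>(1/r) ^ k * (S ^\<^sub>m k) $$ (l,j)\<bar> \<le> C" by (simp only: norm_of_real)
    have "\<bar>(1/r) ^ k\<bar> = (1/r) ^ k" using r(1) by simp
    hence "(1/r) ^ k * \<bar>(S ^\<^sub>m k) $$ (l,j)\<bar> \<le> C" using h2 by (simp only: abs_mult)
    hence "\<bar>(S ^\<^sub>m k) $$ (l,j)\<bar> \<le> C * r ^ k" using r(1) by (simp add: field_simps)
    thus ?thesis by simp
  qed
  define As where "As = (\<Sum>l<m. \<Sum>j<m. a l j)"
  have As: "As \<ge> 0" unfolding As_def using a by (intro sum_nonneg) auto
  have le: "c ^ k * K0 \<le> As * C * r ^ k" for k
  proof -
    have "c ^ k * K0 \<le> (\<Sum>l<m. \<Sum>j<m. a l j * (S ^\<^sub>m k) $$ (l,j))" by (rule g)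
    also have "\<dots> \<le> (\<Sum>l<m. \<Sum>j<m. a l j * (C * r ^ k))"
      by (intro sum_mono mult_left_mono bound a) auto
    also have "\<dots> = As * C * r ^ k" unfolding As_def by (simp add: sum_distrib_right mult.assoc)
    finally show ?thesis .
  qed
  have q: "1 < c / r" using r by simp
  from real_arch_pow[OF q, of "As * C / K0"] obtain k where k: "As * C / K0 < (c / r) ^ k" by auto
  have "(c / r) ^ k * K0 * r ^ k = c ^ k * K0" using r(1) by (simp add: power_divide)
  also have "\<dots> \<le> As * C * r ^ k" by (rule le)
  finally have "(c / r) ^ k * K0 \<le> As * C" using r(1) by simp
  hence "(c / r) ^ k \<le> As * C / K0" using K0 by (simp add: field_simps)
  with k show False by simp
qed



definition nonneg :: "real mat \<Rightarrow> bool" where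
  "nonneg M \<longleftrightarrow> (\<forall>i<dim_row M. \<forall>j<dim_col M. 0 \<le> M $$ (i,j))"

lemma index_mult_sum: fixes A B :: "real mat"
  assumes "A \<in> carrier_mat a b" "B \<in> carrier_mat b k" "i < a" "j < k"
  shows "(A * B) $$ (i,j) = (\<Sum>l<b. A $$ (i,l) * B $$ (l,j))"
  using assms by (auto simp: scalar_prod_def atLeast0LessThan intro!: sum.cong)

lemma nonneg_mult: assumes A: "A \<in> carrier_mat a b" and B: "B \<in> carrier_mat b k"
  and nA: "nonneg A" and nB: "nonneg B" shows "nonneg (A * B)"
  unfolding nonneg_def
proof (intro allI impI)
  fix i j assume i: "i < dim_row (A * B)" and j: "j < dim_col (A * B)"
  hence i': "i < a" and j': "j < k" using A B by auto
  show "0 \<le> (A * B) $$ (i,j)" unfolding index_mult_sum[OF A B i' j']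
    using nA nB A B i' j' unfolding nonneg_def by (intro sum_nonneg mult_nonneg_nonneg) auto
qed

lemma nonneg_pow: assumes A: "A \<in> carrier_mat n n" and nA: "nonneg A" shows "nonneg (A ^\<^sub>m k)"
proof (induction k)
  case 0 show ?case using A unfolding nonneg_def by auto
next
  case (Suc k) thus ?case using nonneg_mult[OF pow_carrier_mat[OF A] A _ nA] by simp
qed

lemma mle_left: fixes T B C :: "real mat"
  assumes T: "T \<in> carrier_mat a b" and B: "B \<in> carrier_mat b k" and C: "C \<in> carrier_mat b k"
    and nT: "nonneg T" and le: "mat_le B C"
  shows "mat_le (T * B) (T * C)"
  unfolding mat_le_def
proof (intro conjI allI impI)
  fix i j assume i: "i < dim_row (T * B)" and j: "j < dim_col (T * B)"
  hence i': "i < a" and j': "j < k" using T B by auto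
  show "(T * B) $$ (i,j) \<le> (T * C) $$ (i,j)"
    unfolding index_mult_sum[OF T B i' j'] index_mult_sum[OF T C i' j']
    using nT le T B C i' j' unfolding nonneg_def mat_le_def by (intro sum_mono mult_left_mono) auto
qed (insert T B C, auto)

lemma mle_right: fixes S B C :: "real mat"
  assumes S: "S \<in> carrier_mat b k" and B: "B \<in> carrier_mat a b" and C: "C \<in> carrier_mat a b"
    and nS: "nonneg S" and le: "mat_le B C"
  shows "mat_le (B * S) (C * S)"
  unfolding mat_le_def
proof (intro conjI allI impI)
  fix i j assume i: "i < dim_row (B * S)" and j: "j < dim_col (B * S)"
  hence i': "i < a" and j': "j < k" using S B by auto
  show "(B * S) $$ (i,j) \<le> (C * S) $$ (i,j)"
    unfolding index_mult_sum[OF B S i' j'] index_mult_sum[OF C S i' j']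
    using nS le S B C i' j' unfolding nonneg_def mat_le_def by (intro sum_mono mult_right_mono) auto
qed (insert S B C, auto)

lemma mle_smult: fixes B C :: "real mat"
  assumes le: "mat_le B C" and c: "c \<ge> 0" shows "mat_le (c \<cdot>\<^sub>m B) (c \<cdot>\<^sub>m C)"
  using le c unfolding mat_le_def by (auto intro: mult_left_mono)

lemma mle_trans: assumes AB: "mat_le A B" and BC: "mat_le B C" shows "mat_le A C"
  unfolding mat_le_def
proof (intro conjI allI impI)
  fix i j assume i: "i < dim_row A" and j: "j < dim_col A"
  have "A $$ (i,j) \<le> B $$ (i,j)" using AB i j unfolding mat_le_def by auto
  also have "\<dots> \<le> C $$ (i,j)" using AB BC i j unfolding mat_le_def by auto
  finally show "A $$ (i,j) \<le> C $$ (i,j)" .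
qed (insert AB BC, auto simp: mat_le_def)

lemma power_bound:
  fixes T S N :: "real mat"
  assumes T: "T \<in> carrier_mat n n" and S: "S \<in> carrier_mat m m" and N: "N \<in> carrier_mat n m"
    and nT: "nonneg T" and nS: "nonneg S" and c: "c > 0"
    and le: "mat_le (c \<cdot>\<^sub>m (T * N)) (N * S)"
  shows "mat_le (c ^ k \<cdot>\<^sub>m (T ^\<^sub>m k * N)) (N * S ^\<^sub>m k)"
proof (induction k)
  case 0 show ?case using N T S unfolding mat_le_def by auto
next
  case (Suc k)
  have Tk: "T ^\<^sub>m k \<in> carrier_mat n n" using T by auto
  have Sk: "S ^\<^sub>m k \<in> carrier_mat m m" using S by auto
  have "c ^ Suc k \<cdot>\<^sub>m (T ^\<^sub>m Suc k * N) = c ^ k \<cdot>\<^sub>m (T ^\<^sub>m k * (c \<cdot>\<^sub>m (T * N)))"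
  proof -
    have "T ^\<^sub>m Suc k * N = T ^\<^sub>m k * (T * N)" using Tk T N by (simp add: assoc_mult_mat[of _ n n _ n _ m])
    moreover have "T ^\<^sub>m k * (c \<cdot>\<^sub>m (T * N)) = c \<cdot>\<^sub>m (T ^\<^sub>m k * (T * N))"
      by (rule mult_smult_distrib[OF Tk]) (insert T N, auto)
    moreover have "c ^ Suc k \<cdot>\<^sub>m X = c ^ k \<cdot>\<^sub>m (c \<cdot>\<^sub>m X)" for X :: "real mat"
      by (rule eq_matI) auto
    ultimately show ?thesis by simp
  qed
  also have "mat_le \<dots> (c ^ k \<cdot>\<^sub>m (T ^\<^sub>m k * (N * S)))"
    by (rule mle_smult[OF mle_left[OF Tk _ _ nonneg_pow[OF T nT] le]]) (insert T N S c, auto)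
  finally have 1: "mat_le (c ^ Suc k \<cdot>\<^sub>m (T ^\<^sub>m Suc k * N)) (c ^ k \<cdot>\<^sub>m (T ^\<^sub>m k * (N * S)))" .
  have 2: "c ^ k \<cdot>\<^sub>m (T ^\<^sub>m k * (N * S)) = (c ^ k \<cdot>\<^sub>m (T ^\<^sub>m k * N)) * S"
    using Tk N S by (simp add: mult_smult_assoc_mat[of _ n m] assoc_mult_mat[of _ n n _ m _ m])
  have 3: "mat_le ((c ^ k \<cdot>\<^sub>m (T ^\<^sub>m k * N)) * S) ((N * S ^\<^sub>m k) * S)"
    by (rule mle_right[OF S _ _ nS Suc]) (insert Tk N Sk, auto)
  have 4: "(N * S ^\<^sub>m k) * S = N * S ^\<^sub>m Suc k" using N Sk S by (simp add: assoc_mult_mat[of _ n m _ m _ m])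
  show ?case using mle_trans[OF 1 3[folded 2]] 4 by simp
qed



lemma mv_index: fixes A :: "'a :: semiring_0 mat"
  assumes A: "A \<in> carrier_mat nr nc" and v: "v \<in> carrier_vec nc" and i: "i < nr"
  shows "(A *\<^sub>v v) $ i = (\<Sum>j<nc. A $$ (i,j) * v $ j)"
proof -
  have "(A *\<^sub>v v) $ i = row A i \<bullet> v" using A i by simp
  also have "\<dots> = (\<Sum>j\<in>{0..<nc}. row A i $ j * v $ j)" unfolding scalar_prod_def using v by simp
  also have "\<dots> = (\<Sum>j<nc. A $$ (i,j) * v $ j)" unfolding atLeast0LessThan using A i by (intro sum.cong) auto
  finally show ?thesis .
qed

lemma core:
  fixes T S N X :: "real mat"
  assumes T: "T \<in> carrier_mat n n" and S: "S \<in> carrier_mat m m" and N: "N \<in> carrier_mat n m"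
    and X: "X \<in> carrier_mat m n" and n: "n > 0" and m: "m > 0"
    and TNX: "T = N * X" and nT: "nonneg T" and nS: "nonneg S" and nN: "nonneg N" and c: "c > 0"
    and le: "mat_le (c \<cdot>\<^sub>m (T * N)) (N * S)"
  shows "c * rho T \<le> rho S"
proof (cases "rho T = 0")
  case True thus ?thesis using rho_nonneg[OF S m] by simp
next
  case False
  obtain lam where ev: "eigenvalue (mc T) lam" and nl: "norm lam = rho T" using rho_ev[OF T n] by auto
  have lam0: "lam \<noteq> 0" using nl False by auto
  have Tc: "mc T \<in> carrier_mat n n" and Nc: "mc N \<in> carrier_mat n m" and Xc: "mc X \<in> carrier_mat m n"
    using T N X by auto
  from ev obtain v where v: "eigenvector (mc T) v lam" unfolding eigenvalue_def by auto
  hence vc: "v \<in> carrier_vec n" and v0: "v \<noteq> 0\<^sub>v n" and Tv: "mc T *\<^sub>v v = lam \<cdot>\<^sub>v v"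
    unfolding eigenvector_def using Tc by auto
  define w where "w = (1 / lam) \<cdot>\<^sub>v (mc X *\<^sub>v v)"
  have wc: "w \<in> carrier_vec m" unfolding w_def using Xc vc by auto
  have TNXc: "mc T = mc N * mc X" unfolding TNX by (rule of_real_hom.mat_hom_mult[OF N X])
  have Nw: "mc N *\<^sub>v w = v"
  proof -
    have "mc N *\<^sub>v w = (1 / lam) \<cdot>\<^sub>v (mc N *\<^sub>v (mc X *\<^sub>v v))" unfolding w_def
      by (rule mult_mat_vec[OF Nc]) (insert Xc vc, auto)
    also have "mc N *\<^sub>v (mc X *\<^sub>v v) = mc T *\<^sub>v v" unfolding TNXc by (rule assoc_mult_mat_vec[symmetric, OF Nc Xc vc])
    also have "(1 / lam) \<cdot>\<^sub>v (mc T *\<^sub>v v) = (1 / lam) \<cdot>\<^sub>v (lam \<cdot>\<^sub>v v)" by (simp only: Tv)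
    also have "\<dots> = v" using lam0 by (simp add: smult_smult_assoc)
    finally show ?thesis .
  qed
  obtain i where i: "i < n" and vi: "v $ i \<noteq> 0"
  proof -
    have "\<exists>i<n. v $ i \<noteq> 0"
    proof (rule ccontr)
      assume "\<not> (\<exists>i<n. v $ i \<noteq> 0)"
      hence "v = 0\<^sub>v n" using vc by (intro eq_vecI) auto
      thus False using v0 by simp
    qed
    thus ?thesis using that by auto
  qed
  have Ta: "\<And>k. mc (T ^\<^sub>m k) = mc T ^\<^sub>m k" by (rule of_real_hom.mat_hom_pow[OF T])
  have key: "(c * norm lam) ^ k * norm (v $ i) \<le> (\<Sum>l<m. \<Sum>j<m. (N $$ (i,l) * norm (w $ j)) * (S ^\<^sub>m k) $$ (l,j))" for k
  proof -
    have TkN: "T ^\<^sub>m k * N \<in> carrier_mat n m" using T N by auto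
    have Tkc: "mc T ^\<^sub>m k \<in> carrier_mat n n" using Tc by auto
    have "mc (T ^\<^sub>m k * N) *\<^sub>v w = (mc T ^\<^sub>m k * mc N) *\<^sub>v w"
      unfolding of_real_hom.mat_hom_mult[OF pow_carrier_mat[OF T] N, of k] Ta ..
    also have "\<dots> = mc T ^\<^sub>m k *\<^sub>v (mc N *\<^sub>v w)" by (rule assoc_mult_mat_vec[OF Tkc Nc wc])
    also have "\<dots> = lam ^ k \<cdot>\<^sub>v v" unfolding Nw by (rule eigenvector_pow[OF Tc v])
    finally have eq: "mc (T ^\<^sub>m k * N) *\<^sub>v w = lam ^ k \<cdot>\<^sub>v v" .
    have "lam ^ k * v $ i = (mc (T ^\<^sub>m k * N) *\<^sub>v w) $ i" unfolding eq using i vc by simp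
    also have "\<dots> = (\<Sum>j<m. (mc (T ^\<^sub>m k * N)) $$ (i,j) * w $ j)"
      by (rule mv_index[of _ n m]) (insert TkN wc i, auto)
    also have "\<dots> = (\<Sum>j<m. complex_of_real ((T ^\<^sub>m k * N) $$ (i,j)) * w $ j)"
      by (rule sum.cong) (insert carrier_matD[OF TkN] i, auto)
    finally have e2: "lam ^ k * v $ i = (\<Sum>j<m. complex_of_real ((T ^\<^sub>m k * N) $$ (i,j)) * w $ j)" .
    have nTkN: "nonneg (T ^\<^sub>m k * N)" by (rule nonneg_mult[OF pow_carrier_mat[OF T] N nonneg_pow[OF T nT] nN])
    have "norm lam ^ k * norm (v $ i) = norm (lam ^ k * v $ i)" by (simp add: norm_mult norm_power)
    also have "\<dots> \<le> (\<Sum>j<m. norm (complex_of_real ((T ^\<^sub>m k * N) $$ (i,j)) * w $ j))"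
      unfolding e2 by (rule norm_sum)
    also have "\<dots> = (\<Sum>j<m. (T ^\<^sub>m k * N) $$ (i,j) * norm (w $ j))"
    proof (rule sum.cong)
      fix j assume "j \<in> {..<m}"
      hence "0 \<le> (T ^\<^sub>m k * N) $$ (i,j)" using nTkN carrier_matD[OF TkN] i unfolding nonneg_def by auto
      thus "norm (complex_of_real ((T ^\<^sub>m k * N) $$ (i,j)) * w $ j) = (T ^\<^sub>m k * N) $$ (i,j) * norm (w $ j)"
        by (simp add: norm_mult)
    qed simp
    finally have b1: "norm lam ^ k * norm (v $ i) \<le> (\<Sum>j<m. (T ^\<^sub>m k * N) $$ (i,j) * norm (w $ j))" .
    have pb: "mat_le (c ^ k \<cdot>\<^sub>m (T ^\<^sub>m k * N)) (N * S ^\<^sub>m k)" by (rule power_bound[OF T S N nT nS c le])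
    have "(c * norm lam) ^ k * norm (v $ i) = c ^ k * (norm lam ^ k * norm (v $ i))" by (simp add: power_mult_distrib)
    also have "\<dots> \<le> c ^ k * (\<Sum>j<m. (T ^\<^sub>m k * N) $$ (i,j) * norm (w $ j))"
      using b1 c by (intro mult_left_mono) auto
    also have "\<dots> = (\<Sum>j<m. (c ^ k \<cdot>\<^sub>m (T ^\<^sub>m k * N)) $$ (i,j) * norm (w $ j))"
      using carrier_matD[OF TkN] i by (auto simp: sum_distrib_left ac_simps intro!: sum.cong)
    also have "\<dots> \<le> (\<Sum>j<m. (N * S ^\<^sub>m k) $$ (i,j) * norm (w $ j))"
    proof (rule sum_mono)
      fix j assume j: "j \<in> {..<m}"
      have "(c ^ k \<cdot>\<^sub>m (T ^\<^sub>m k * N)) $$ (i,j) \<le> (N * S ^\<^sub>m k) $$ (i,j)"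
        using pb i j carrier_matD[OF TkN] unfolding mat_le_def by auto
      thus "(c ^ k \<cdot>\<^sub>m (T ^\<^sub>m k * N)) $$ (i,j) * norm (w $ j) \<le> (N * S ^\<^sub>m k) $$ (i,j) * norm (w $ j)"
        by (rule mult_right_mono) simp
    qed
    also have "\<dots> = (\<Sum>j<m. \<Sum>l<m. N $$ (i,l) * (S ^\<^sub>m k) $$ (l,j) * norm (w $ j))"
      using index_mult_sum[OF N pow_carrier_mat[OF S] i] by (auto simp: sum_distrib_right intro!: sum.cong)
    also have "\<dots> = (\<Sum>l<m. \<Sum>j<m. (N $$ (i,l) * norm (w $ j)) * (S ^\<^sub>m k) $$ (l,j))"
      by (subst sum.swap) (auto simp: ac_simps intro!: sum.cong)
    finally show ?thesis .
  qed
  have "c * norm lam \<le> rho S"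
  proof (rule growth[OF S _ _ _ key])
    show "0 < c * norm lam" using c lam0 by simp
    show "0 < norm (v $ i)" using vi by simp
    fix l j assume "l < m" "j < m"
    thus "0 \<le> N $$ (i,l) * norm (w $ j)"
      using nN N i unfolding nonneg_def by auto
  qed
  thus ?thesis using nl by simp
qed



lemma pos_min: fixes f :: "'a \<Rightarrow> real"
  assumes "finite I" "\<And>x. x \<in> I \<Longrightarrow> 0 < f x"
  shows "\<exists>d>0. \<forall>x\<in>I. d \<le> f x"
proof (cases "I = {}")
  case True thus ?thesis by (intro exI[of _ 1]) auto
next
  case False
  show ?thesis
    by (rule exI[of _ "Min (f ` I)"]) (insert assms False, auto)
qed

lemma one_pow: "(1\<^sub>m n :: 'a :: semiring_1 mat) ^\<^sub>m k = 1\<^sub>m n"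
  by (induction k) auto

lemma ite0_mult: "(if P then a else 0) * (x::real) = (if P then a * x else 0)" by simp

lemma abstract_le:
  fixes T S N X :: "real mat"
  assumes T: "T \<in> carrier_mat n n" and S: "S \<in> carrier_mat m m" and N: "N \<in> carrier_mat n m"
    and X: "X \<in> carrier_mat m n" and n: "n > 0" and m: "m > 0"
    and TNX: "T = N * X" and nT: "nonneg T" and nS: "nonneg S" and nN: "nonneg N"
    and le: "mat_le (T * N) (N * S)"
  shows "rho T \<le> rho S"
proof -
  have "1 \<cdot>\<^sub>m (T * N) = T * N" by (rule eq_matI) auto
  with le have "mat_le (1 \<cdot>\<^sub>m (T * N)) (N * S)" by simp
  from core[OF T S N X n m TNX nT nS nN _ this] show ?thesis by simp
qed

lemma abstract_lt:
  fixes T S N X :: "real mat"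
  assumes T: "T \<in> carrier_mat n n" and S: "S \<in> carrier_mat m m" and N: "N \<in> carrier_mat n m"
    and X: "X \<in> carrier_mat m n" and n: "n > 0" and m: "m > 0"
    and TNX: "T = N * X" and nT: "nonneg T" and nS: "nonneg S"
    and pN: "\<And>i j. i < n \<Longrightarrow> j < m \<Longrightarrow> 0 < N $$ (i,j)"
    and lt: "\<And>i j. i < n \<Longrightarrow> j < m \<Longrightarrow> (T * N) $$ (i,j) < (N * S) $$ (i,j)"
  shows "rho T < rho S"
proof -
  have nN: "nonneg N" using pN N unfolding nonneg_def by (auto intro: less_imp_le)
  have TN: "T * N \<in> carrier_mat n m" and NS: "N * S \<in> carrier_mat n m" using T N S by auto
  have nTN: "nonneg (T * N)" by (rule nonneg_mult[OF T N nT nN])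
  define I where "I = {0..<n} \<times> {0..<m}"
  have "\<exists>d>0. \<forall>x\<in>I. d \<le> (\<lambda>(i,j). ((N * S) $$ (i,j) - (T * N) $$ (i,j)) / ((T * N) $$ (i,j) + N $$ (i,j))) x"
  proof (rule pos_min)
    show "finite I" unfolding I_def by auto
    fix x assume "x \<in> I"
    then obtain i j where x: "x = (i,j)" and i: "i < n" and j: "j < m" unfolding I_def by auto
    have "0 \<le> (T * N) $$ (i,j)" using nTN carrier_matD[OF TN] i j unfolding nonneg_def by auto
    thus "0 < (\<lambda>(i,j). ((N * S) $$ (i,j) - (T * N) $$ (i,j)) / ((T * N) $$ (i,j) + N $$ (i,j))) x"
      unfolding x using lt[OF i j] pN[OF i j] by (auto intro!: divide_pos_pos)
  qed
  then obtain d where d: "d > 0" and dle: "\<And>i j. i < n \<Longrightarrow> j < m \<Longrightarrow>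
      d \<le> ((N * S) $$ (i,j) - (T * N) $$ (i,j)) / ((T * N) $$ (i,j) + N $$ (i,j))"
    unfolding I_def by fastforce
  have ineq: "d * (T * N) $$ (i,j) + d * N $$ (i,j) \<le> (N * S) $$ (i,j) - (T * N) $$ (i,j)"
    if i: "i < n" and j: "j < m" for i j
  proof -
    have p: "0 < (T * N) $$ (i,j) + N $$ (i,j)"
      using nTN carrier_matD[OF TN] i j pN[OF i j] unfolding nonneg_def by (auto simp: add_nonneg_pos)
    from dle[OF i j] p have "d * ((T * N) $$ (i,j) + N $$ (i,j)) \<le> (N * S) $$ (i,j) - (T * N) $$ (i,j)"
      by (simp add: le_divide_eq)
    thus ?thesis by (simp add: distrib_left)
  qed
  have le1: "mat_le ((1 + d) \<cdot>\<^sub>m (T * N)) (N * S)" unfolding mat_le_def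
  proof (intro conjI allI impI)
    fix i j assume "i < dim_row ((1 + d) \<cdot>\<^sub>m (T * N))" "j < dim_col ((1 + d) \<cdot>\<^sub>m (T * N))"
    hence i: "i < n" and j: "j < m" using TN by auto
    have "0 \<le> d * N $$ (i,j)" using d pN[OF i j] by simp
    with ineq[OF i j] have "(1 + d) * (T * N) $$ (i,j) \<le> (N * S) $$ (i,j)" by (simp add: distrib_right)
    thus "((1 + d) \<cdot>\<^sub>m (T * N)) $$ (i,j) \<le> (N * S) $$ (i,j)" using i j carrier_matD[OF TN] by simp
  qed (insert T N S, auto)
  have c1: "(1 + d) * rho T \<le> rho S" by (rule core[OF T S N X n m TNX nT nS nN _ le1]) (insert d, simp)
  have le2: "mat_le (d \<cdot>\<^sub>m (1\<^sub>m n * N)) (N * S)" unfolding mat_le_def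
  proof (intro conjI allI impI)
    fix i j assume "i < dim_row (d \<cdot>\<^sub>m (1\<^sub>m n * N))" "j < dim_col (d \<cdot>\<^sub>m (1\<^sub>m n * N))"
    hence i: "i < n" and j: "j < m" using N by auto
    have "0 \<le> d * (T * N) $$ (i,j)" using d nTN carrier_matD[OF TN] i j unfolding nonneg_def by auto
    moreover have "0 \<le> (T * N) $$ (i,j)" using nTN carrier_matD[OF TN] i j unfolding nonneg_def by auto
    ultimately have "d * N $$ (i,j) \<le> (N * S) $$ (i,j)" using ineq[OF i j] by simp
    thus "(d \<cdot>\<^sub>m (1\<^sub>m n * N)) $$ (i,j) \<le> (N * S) $$ (i,j)" using i j N by simp
  qed (insert T N S, auto)
  have one: "1\<^sub>m n \<in> carrier_mat n n" by simp
  have n1: "nonneg (1\<^sub>m n)" unfolding nonneg_def by auto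
  have pb: "\<And>k. mat_le (d ^ k \<cdot>\<^sub>m (1\<^sub>m n ^\<^sub>m k * N)) (N * S ^\<^sub>m k)"
    by (rule power_bound[OF one S N n1 nS d le2])
  have dS: "d \<le> rho S"
  proof (rule growth[OF S d, of "N $$ (0,0)" "\<lambda>l j. if j = 0 then N $$ (0,l) else 0"])
    show "0 < N $$ (0,0)" using pN n m by simp
    fix l j assume "l < m" "j < m"
    thus "0 \<le> (if j = 0 then N $$ (0,l) else 0)" using pN n by (auto intro: less_imp_le)
  next
    fix k
    have "d ^ k * N $$ (0,0) = (d ^ k \<cdot>\<^sub>m (1\<^sub>m n ^\<^sub>m k * N)) $$ (0,0)" using n m N by (simp add: one_pow)
    also have "\<dots> \<le> (N * S ^\<^sub>m k) $$ (0,0)" using pb[of k] n m N unfolding mat_le_def by auto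
    also have "\<dots> = (\<Sum>l<m. N $$ (0,l) * (S ^\<^sub>m k) $$ (l,0))"
      by (rule index_mult_sum[OF N pow_carrier_mat[OF S] n m])
    also have "\<dots> = (\<Sum>l<m. \<Sum>j<m. (if j = 0 then N $$ (0,l) else 0) * (S ^\<^sub>m k) $$ (l,j))"
      using m by (simp add: ite0_mult)
    finally show "d ^ k * N $$ (0,0) \<le> (\<Sum>l<m. \<Sum>j<m. (if j = 0 then N $$ (0,l) else 0) * (S ^\<^sub>m k) $$ (l,j))" .
  qed
  have r0: "0 \<le> rho T" by (rule rho_nonneg[OF T n])
  show ?thesis
  proof (cases "rho T = 0")
    case True thus ?thesis using dS d by simp
  next
    case False
    hence p: "0 < rho T" using r0 by simp
    have "0 < d * rho T" using d p by simp
    hence "rho T < (1 + d) * rho T" by (simp add: distrib_right)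
    thus ?thesis using c1 by linarith
  qed
qed



lemma TN_entry: fixes T Ad U :: "real mat"
  assumes T: "T \<in> carrier_mat n n" and Ad: "Ad \<in> carrier_mat n m" and U: "U \<in> carrier_mat n m"
    and e: "T * Ad = Ad - U" and i: "i < n" and j: "j < m"
  shows "(T * ((-1) \<cdot>\<^sub>m Ad)) $$ (i,j) = U $$ (i,j) - Ad $$ (i,j)"
proof -
  have "T * ((-1) \<cdot>\<^sub>m Ad) = (-1) \<cdot>\<^sub>m (T * Ad)" by (rule mult_smult_distrib[OF T Ad])
  thus ?thesis unfolding e using i j Ad U by simp
qed

lemma NS_entry: fixes S Ad U :: "real mat"
  assumes S: "S \<in> carrier_mat m m" and Ad: "Ad \<in> carrier_mat n m" and U: "U \<in> carrier_mat n m"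
    and e: "Ad * S = Ad - U" and i: "i < n" and j: "j < m"
  shows "(((-1) \<cdot>\<^sub>m Ad) * S) $$ (i,j) = U $$ (i,j) - Ad $$ (i,j)"
proof -
  have "((-1) \<cdot>\<^sub>m Ad) * S = (-1) \<cdot>\<^sub>m (Ad * S)" by (rule mult_smult_assoc_mat[OF Ad S])
  thus ?thesis unfolding e using i j Ad U by simp
qed

lemma nonneg_of_le: "mat_le (0\<^sub>m k l) M \<Longrightarrow> nonneg M"
  unfolding mat_le_def nonneg_def by auto

lemma nonneg_transpose: "nonneg M \<Longrightarrow> nonneg (transpose_mat M)"
  unfolding nonneg_def by auto

lemma caseI:
  fixes A U1 V1 U2 V2 :: "real mat"
  assumes A: "A \<in> carrier_mat m n" and m: "m > 0" and n: "n > 0"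
    and p1: "proper_nonneg_splitting_I A U1 V1" and p2: "proper_nonneg_splitting_II A U2 V2"
  shows "mat_le (mp_inverse A) (0\<^sub>m n m) \<and> mat_le (mp_inverse U1) (mp_inverse U2) \<longrightarrow>
            rho (mp_inverse U1 * V1) \<le> rho (mp_inverse U2 * V2)"
    "mat_lt (mp_inverse A) (0\<^sub>m n m) \<and> mat_lt (mp_inverse U1) (mp_inverse U2) \<longrightarrow>
            rho (mp_inverse U1 * V1) < rho (mp_inverse U2 * V2)"
proof -
  have ps1: "proper_splitting A U1 V1" and nn1: "mat_le (0\<^sub>m n n) (mp_inverse U1 * V1)"
    using p1 A unfolding proper_nonneg_splitting_I_def by auto
  have ps2: "proper_splitting A U2 V2" and nn2: "mat_le (0\<^sub>m m m) (V2 * mp_inverse U2)"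
    using p2 A unfolding proper_nonneg_splitting_II_def by auto
  note f1 = split_facts[OF A ps1] and f2 = split_facts[OF A ps2]
  let ?Ad = "mp_inverse A" and ?U1d = "mp_inverse U1" and ?U2d = "mp_inverse U2"
  have Ad: "?Ad \<in> carrier_mat n m" using mp_facts[OF A] by auto
  have U1d: "?U1d \<in> carrier_mat n m" using mp_facts[OF f1(1)] by auto
  have U2d: "?U2d \<in> carrier_mat n m" using mp_facts[OF f2(1)] by auto
  define T where "T = ?U1d * V1"
  define S where "S = V2 * ?U2d"
  define N where "N = (-1) \<cdot>\<^sub>m ?Ad"
  define X where "X = (-1) \<cdot>\<^sub>m (A * T)"
  have Tc: "T \<in> carrier_mat n n" unfolding T_def using U1d f1(2) by auto
  have Sc: "S \<in> carrier_mat m m" unfolding S_def using U2d f2(2) by auto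
  have Nc: "N \<in> carrier_mat n m" unfolding N_def using Ad by auto
  have Xc: "X \<in> carrier_mat m n" unfolding X_def using A Tc by auto
  have nT: "nonneg T" unfolding T_def by (rule nonneg_of_le[OF nn1])
  have nS: "nonneg S" unfolding S_def by (rule nonneg_of_le[OF nn2])
  have TNX: "T = N * X"
  proof -
    have AT: "A * T \<in> carrier_mat m n" using A Tc by auto
    have "N * X = (-1) \<cdot>\<^sub>m (?Ad * ((-1) \<cdot>\<^sub>m (A * T)))" unfolding N_def X_def
      by (rule mult_smult_assoc_mat[OF Ad, of _ n]) (insert AT, auto)
    also have "?Ad * ((-1) \<cdot>\<^sub>m (A * T)) = (-1) \<cdot>\<^sub>m (?Ad * (A * T))" by (rule mult_smult_distrib[OF Ad AT])
    also have "?Ad * (A * T) = T" unfolding T_def using f1(5) by simp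
    also have "(-1) \<cdot>\<^sub>m ((-1) \<cdot>\<^sub>m T) = T" by (rule eq_matI) auto
    finally show ?thesis by simp
  qed
  have TN: "(T * N) $$ (i,j) = ?U1d $$ (i,j) - ?Ad $$ (i,j)" if "i < n" "j < m" for i j
    unfolding N_def by (rule TN_entry[OF Tc Ad U1d _ that]) (insert f1(3), simp add: T_def)
  have NS: "(N * S) $$ (i,j) = ?U2d $$ (i,j) - ?Ad $$ (i,j)" if "i < n" "j < m" for i j
    unfolding N_def by (rule NS_entry[OF Sc Ad U2d _ that]) (insert f2(4), simp add: S_def)
  have rS: "rho S = rho (?U2d * V2)" unfolding S_def by (rule rho_comm[OF f2(2) U2d m n])
  show "mat_le ?Ad (0\<^sub>m n m) \<and> mat_le ?U1d ?U2d \<longrightarrow> rho (?U1d * V1) \<le> rho (?U2d * V2)"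
  proof (intro impI, elim conjE)
    assume h1: "mat_le ?Ad (0\<^sub>m n m)" and h2: "mat_le ?U1d ?U2d"
    have nN: "nonneg N" using h1 Ad unfolding N_def nonneg_def mat_le_def by auto
    have le: "mat_le (T * N) (N * S)" unfolding mat_le_def
    proof (intro conjI allI impI)
      fix i j assume "i < dim_row (T * N)" "j < dim_col (T * N)"
      hence i: "i < n" and j: "j < m" using Tc Nc by auto
      show "(T * N) $$ (i,j) \<le> (N * S) $$ (i,j)" unfolding TN[OF i j] NS[OF i j]
        using h2 i j U1d unfolding mat_le_def by auto
    qed (insert Tc Nc Sc, auto)
    from abstract_le[OF Tc Sc Nc Xc n m TNX nT nS nN le] rS
    show "rho (?U1d * V1) \<le> rho (?U2d * V2)" unfolding T_def by simp
  qed
  show "mat_lt ?Ad (0\<^sub>m n m) \<and> mat_lt ?U1d ?U2d \<longrightarrow> rho (?U1d * V1) < rho (?U2d * V2)"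
  proof (intro impI, elim conjE)
    assume h1: "mat_lt ?Ad (0\<^sub>m n m)" and h2: "mat_lt ?U1d ?U2d"
    have pN: "0 < N $$ (i,j)" if "i < n" "j < m" for i j
      using h1 Ad that unfolding N_def mat_lt_def by auto
    have lt: "(T * N) $$ (i,j) < (N * S) $$ (i,j)" if i: "i < n" and j: "j < m" for i j
      unfolding TN[OF i j] NS[OF i j] using h2 i j U1d unfolding mat_lt_def by auto
    from abstract_lt[OF Tc Sc Nc Xc n m TNX nT nS pN lt] rS
    show "rho (?U1d * V1) < rho (?U2d * V2)" unfolding T_def by simp
  qed
qed

lemma caseII:
  fixes A U1 V1 U2 V2 :: "real mat"
  assumes A: "A \<in> carrier_mat m n" and m: "m > 0" and n: "n > 0"
    and p1: "proper_nonneg_splitting_II A U1 V1" and p2: "proper_nonneg_splitting_I A U2 V2"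
  shows "mat_le (mp_inverse A) (0\<^sub>m n m) \<and> mat_le (mp_inverse U1) (mp_inverse U2) \<longrightarrow>
            rho (mp_inverse U1 * V1) \<le> rho (mp_inverse U2 * V2)"
    "mat_lt (mp_inverse A) (0\<^sub>m n m) \<and> mat_lt (mp_inverse U1) (mp_inverse U2) \<longrightarrow>
            rho (mp_inverse U1 * V1) < rho (mp_inverse U2 * V2)"
proof -
  have ps1: "proper_splitting A U1 V1" and nn1: "mat_le (0\<^sub>m m m) (V1 * mp_inverse U1)"
    using p1 A unfolding proper_nonneg_splitting_II_def by auto
  have ps2: "proper_splitting A U2 V2" and nn2: "mat_le (0\<^sub>m n n) (mp_inverse U2 * V2)"
    using p2 A unfolding proper_nonneg_splitting_I_def by auto
  note f1 = split_facts[OF A ps1] and f2 = split_facts[OF A ps2]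
  let ?Ad = "mp_inverse A" and ?U1d = "mp_inverse U1" and ?U2d = "mp_inverse U2"
  have Ad: "?Ad \<in> carrier_mat n m" using mp_facts[OF A] by auto
  have U1d: "?U1d \<in> carrier_mat n m" using mp_facts[OF f1(1)] by auto
  have U2d: "?U2d \<in> carrier_mat n m" using mp_facts[OF f2(1)] by auto
  define S1 where "S1 = V1 * ?U1d"
  define T2 where "T2 = ?U2d * V2"
  define N where "N = (-1) \<cdot>\<^sub>m ?Ad"
  define X0 where "X0 = (-1) \<cdot>\<^sub>m (S1 * A)"
  have S1c: "S1 \<in> carrier_mat m m" unfolding S1_def using U1d f1(2) by auto
  have T2c: "T2 \<in> carrier_mat n n" unfolding T2_def using U2d f2(2) by auto
  have Nc: "N \<in> carrier_mat n m" unfolding N_def using Ad by auto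
  have X0c: "X0 \<in> carrier_mat m n" unfolding X0_def using A S1c by auto
  have nS1: "nonneg S1" unfolding S1_def by (rule nonneg_of_le[OF nn1])
  have nT2: "nonneg T2" unfolding T2_def by (rule nonneg_of_le[OF nn2])
  have SXN: "S1 = X0 * N"
  proof -
    have SA: "S1 * A \<in> carrier_mat m n" using A S1c by auto
    have "X0 * N = (-1) \<cdot>\<^sub>m ((S1 * A) * ((-1) \<cdot>\<^sub>m ?Ad))" unfolding N_def X0_def
      by (rule mult_smult_assoc_mat[OF SA, of _ m]) (insert Ad, auto)
    also have "(S1 * A) * ((-1) \<cdot>\<^sub>m ?Ad) = (-1) \<cdot>\<^sub>m ((S1 * A) * ?Ad)" by (rule mult_smult_distrib[OF SA Ad])
    also have "(S1 * A) * ?Ad = S1" unfolding S1_def using f1(6) by simp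
    also have "(-1) \<cdot>\<^sub>m ((-1) \<cdot>\<^sub>m S1) = S1" by (rule eq_matI) auto
    finally show ?thesis by simp
  qed
  have NS: "(N * S1) $$ (i,j) = ?U1d $$ (i,j) - ?Ad $$ (i,j)" if "i < n" "j < m" for i j
    unfolding N_def by (rule NS_entry[OF S1c Ad U1d _ that]) (insert f1(4), simp add: S1_def)
  have TN: "(T2 * N) $$ (i,j) = ?U2d $$ (i,j) - ?Ad $$ (i,j)" if "i < n" "j < m" for i j
    unfolding N_def by (rule TN_entry[OF T2c Ad U2d _ that]) (insert f2(3), simp add: T2_def)
  define T' where "T' = transpose_mat S1"
  define S' where "S' = transpose_mat T2"
  define N' where "N' = transpose_mat N"
  define X' where "X' = transpose_mat X0"
  have T'c: "T' \<in> carrier_mat m m" and S'c: "S' \<in> carrier_mat n n" and N'c: "N' \<in> carrier_mat m n"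
    and X'c: "X' \<in> carrier_mat n m"
    unfolding T'_def S'_def N'_def X'_def using S1c T2c Nc X0c by auto
  have TNX': "T' = N' * X'" unfolding T'_def N'_def X'_def SXN by (rule transpose_mult[OF X0c Nc])
  have nT': "nonneg T'" unfolding T'_def by (rule nonneg_transpose[OF nS1])
  have nS': "nonneg S'" unfolding S'_def by (rule nonneg_transpose[OF nT2])
  have TN': "T' * N' = transpose_mat (N * S1)" unfolding T'_def N'_def by (rule transpose_mult[OF Nc S1c, symmetric])
  have NS': "N' * S' = transpose_mat (T2 * N)" unfolding S'_def N'_def by (rule transpose_mult[OF T2c Nc, symmetric])
  have TN'e: "(T' * N') $$ (j,i) = ?U1d $$ (i,j) - ?Ad $$ (i,j)" if "j < m" "i < n" for i j
    unfolding TN' using NS[of i j] that Nc S1c by simp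
  have NS'e: "(N' * S') $$ (j,i) = ?U2d $$ (i,j) - ?Ad $$ (i,j)" if "j < m" "i < n" for i j
    unfolding NS' using TN[of i j] that Nc T2c by simp
  have r1: "rho T' = rho (?U1d * V1)" unfolding T'_def S1_def
    using rho_transpose[of "V1 * ?U1d" m] rho_comm[OF U1d f1(2) n m] U1d f1(2) by simp
  have r2: "rho S' = rho (?U2d * V2)" unfolding S'_def T2_def
    using rho_transpose[of "?U2d * V2" n] U2d f2(2) by simp
  show "mat_le ?Ad (0\<^sub>m n m) \<and> mat_le ?U1d ?U2d \<longrightarrow> rho (?U1d * V1) \<le> rho (?U2d * V2)"
  proof (intro impI, elim conjE)
    assume h1: "mat_le ?Ad (0\<^sub>m n m)" and h2: "mat_le ?U1d ?U2d"
    have nN: "nonneg N'" using h1 Ad unfolding N'_def N_def nonneg_def mat_le_def by auto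
    have le: "mat_le (T' * N') (N' * S')" unfolding mat_le_def
    proof (intro conjI allI impI)
      fix j i assume "j < dim_row (T' * N')" "i < dim_col (T' * N')"
      hence j: "j < m" and i: "i < n" using T'c N'c by auto
      show "(T' * N') $$ (j,i) \<le> (N' * S') $$ (j,i)" unfolding TN'e[OF j i] NS'e[OF j i]
        using h2 i j U1d unfolding mat_le_def by auto
    qed (insert T'c N'c S'c, auto)
    from abstract_le[OF T'c S'c N'c X'c m n TNX' nT' nS' nN le] r1 r2
    show "rho (?U1d * V1) \<le> rho (?U2d * V2)" by simp
  qed
  show "mat_lt ?Ad (0\<^sub>m n m) \<and> mat_lt ?U1d ?U2d \<longrightarrow> rho (?U1d * V1) < rho (?U2d * V2)"
  proof (intro impI, elim conjE)
    assume h1: "mat_lt ?Ad (0\<^sub>m n m)" and h2: "mat_lt ?U1d ?U2d"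
    have pN: "0 < N' $$ (j,i)" if "j < m" "i < n" for j i
      using h1 Ad that unfolding N'_def N_def mat_lt_def by auto
    have lt: "(T' * N') $$ (j,i) < (N' * S') $$ (j,i)" if j: "j < m" and i: "i < n" for j i
      unfolding TN'e[OF j i] NS'e[OF j i] using h2 i j U1d unfolding mat_lt_def by auto
    from abstract_lt[OF T'c S'c N'c X'c m n TNX' nT' nS' pN lt] r1 r2
    show "rho (?U1d * V1) < rho (?U2d * V2)" by simp
  qed
qed

theorem theorem4p14:
  fixes A U1 V1 U2 V2 :: "real mat" and m n :: nat
  assumes "A \<in> carrier_mat m n" and "m > 0" and "n > 0"
    and "(proper_nonneg_splitting_I A U1 V1 \<and> proper_nonneg_splitting_II A U2 V2) \<or>
         (proper_nonneg_splitting_II A U1 V1 \<and> proper_nonneg_splitting_I A U2 V2)"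
    and "convergent_splitting U1 V1" and "convergent_splitting U2 V2"
  shows "(mat_le (mp_inverse A) (0\<^sub>m n m) \<and> mat_le (mp_inverse U1) (mp_inverse U2) \<longrightarrow>
            rho (mp_inverse U1 * V1) \<le> rho (mp_inverse U2 * V2) \<and> rho (mp_inverse U2 * V2) < 1)
       \<and> (mat_lt (mp_inverse A) (0\<^sub>m n m) \<and> mat_lt (mp_inverse U1) (mp_inverse U2) \<longrightarrow>
            rho (mp_inverse U1 * V1) < rho (mp_inverse U2 * V2) \<and> rho (mp_inverse U2 * V2) < 1)"
proof -
  have c2: "rho (mp_inverse U2 * V2) < 1" using assms(6) unfolding convergent_splitting_def .
  from assms(4) show ?thesis
  proof
    assume h: "proper_nonneg_splitting_I A U1 V1 \<and> proper_nonneg_splitting_II A U2 V2"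
    show ?thesis using caseI[OF assms(1-3)] h c2 by blast
  next
    assume h: "proper_nonneg_splitting_II A U1 V1 \<and> proper_nonneg_splitting_I A U2 V2"
    show ?thesis using caseII[OF assms(1-3)] h c2 by blast
  qed
qed



end
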